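(* There is an absolute constant $C>0$ such that for every integer $k\ge2$ and every reduced integer of the form $n=2^{a_1}3^{a_2}\cdots p_k^{a_k}$ (with $a_i\ge0$), $$\sum_{1\le i\le k,\ a_i\ge 3}(a_i-2)\le C\,\frac{k^{2/3}}{(\log k)^{1/3}}.$$
   Context: Let $p_i$ denote the $i$-th prime ($p_1=2$). A positive integer $\prod_i p_i^{a_i}$ (with $a_i=0$ for all sufficiently large $i$) is called reduced if $\left\lfloor\frac{a_i+1}{a_j+2}\right\rfloor<\frac{\log p_j}{\log p_i}$ for all $i,j\ne 1$, and $2^{a_1}<8p_j^2$ for every $j$ with $a_j=0$. *)

theory Defs
  imports Complex_Main "HOL-Computational_Algebra.Primes" "HOL-Library.Infinite_Set"
begin

text \<open>The i-th prime, 1-indexed: nth_prime 1 = 2, nth_prime 2 = 3, ...\<close>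
definition nth_prime :: "nat \<Rightarrow> nat" where
  "nth_prime i = enumerate {p::nat. prime p} (i - 1)"

definition expo :: "nat \<Rightarrow> nat \<Rightarrow> nat" where
  "expo n i = multiplicity (nth_prime i) n"

definition reduced :: "nat \<Rightarrow> bool" where
  "reduced n \<longleftrightarrow> n > 0 \<and>
    (\<forall>i j. i \<ge> 2 \<longrightarrow> j \<ge> 2 \<longrightarrow>
       real_of_int \<lfloor>(real (expo n i) + 1) / (real (expo n j) + 2)\<rfloor>
         < ln (real (nth_prime j)) / ln (real (nth_prime i))) \<and>
    (\<forall>j \<ge> 1. expo n j = 0 \<longrightarrow> (2::real) ^ expo n 1 < 8 * (real (nth_prime j))^2)"

end

theory Submission
  imports Defs
begin

lemma mult_le_self:
  fixes p m :: nat assumes "prime p" "m > 0"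
  shows "multiplicity p m < m"
proof -
  have "p ^ multiplicity p m dvd m" by (rule multiplicity_dvd)
  hence "p ^ multiplicity p m \<le> m" using assms by (simp add: dvd_imp_le)
  moreover have "multiplicity p m < 2 ^ multiplicity p m" by simp
  moreover have "2 ^ multiplicity p m \<le> p ^ multiplicity p m"
    using assms prime_ge_2_nat power_mono by blast
  ultimately show ?thesis by linarith
qed

lemma card_pow_dvd:
  fixes p m M :: nat assumes "prime p" "m > 0" "multiplicity p m \<le> M"
  shows "card {j\<in>{1..M}. p ^ j dvd m} = multiplicity p m"
proof -
  have "{j\<in>{1..M}. p ^ j dvd m} = {1..multiplicity p m}"
  proof -
    have "\<And>j. p ^ j dvd m \<longleftrightarrow> j \<le> multiplicity p m"
      using assms by (intro power_dvd_iff_le_multiplicity) (auto simp: prime_gt_1_nat)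
    thus ?thesis using assms by (intro set_eqI iffI) auto
  qed
  thus ?thesis by simp
qed

lemma div_Suc_split: "Suc n div (q::nat) = (if q dvd Suc n then 1 else 0) + n div q"
  by (simp add: div_Suc dvd_eq_mod_eq_0)

lemma legendre_aux:
  fixes p :: nat assumes "prime p"
  shows "n \<le> M \<Longrightarrow> multiplicity p (fact n) = (\<Sum>j\<in>{1..M}. n div p ^ j)"
proof (induction n arbitrary: M)
  case 0
  then show ?case by simp
next
  case (Suc n)
  have p0: "p > 0" using assms prime_gt_0_nat by blast
  have "multiplicity p (fact (Suc n) :: nat) = multiplicity p (Suc n * fact n)"
    by (simp add: fact_Suc)
  also have "\<dots> = multiplicity p (Suc n) + multiplicity p (fact n :: nat)"
    using assms by (subst prime_elem_multiplicity_mult_distrib) auto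
  also have "multiplicity p (fact n :: nat) = (\<Sum>j\<in>{1..M}. n div p ^ j)"
    using Suc by simp
  also have "multiplicity p (Suc n) = card {j\<in>{1..M}. p ^ j dvd Suc n}"
    using card_pow_dvd[OF assms, of "Suc n" M] mult_le_self[OF assms, of "Suc n"] Suc.prems by simp
  also have "\<dots> = (\<Sum>j\<in>{1..M}. if p ^ j dvd Suc n then 1 else 0)"
    using sum.inter_filter[of "{1..M}" "\<lambda>_. 1::nat" "\<lambda>j. p^j dvd Suc n"] by simp
  also have "(\<Sum>j\<in>{1..M}. if p ^ j dvd Suc n then 1 else 0) + (\<Sum>j\<in>{1..M}. n div p ^ j)
      = (\<Sum>j\<in>{1..M}. Suc n div p ^ j)"
    by (simp add: sum.distrib[symmetric] div_Suc_split)
  finally show ?case .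
qed


lemma div2_le: "2*n div (q::nat) \<le> 2*(n div q) + 1"
proof (cases "q = 0")
  case False
  have e: "2*n = 2*(n mod q) + (2*(n div q))*q" by (metis add_mult_distrib2 mod_div_mult_eq mult.assoc)
  have "2*n div q = 2*(n div q) + (2*(n mod q)) div q"
    by (subst e, simp add: False)
  moreover have "2*(n mod q) < 2 * q" using False by simp
  hence "(2*(n mod q)) div q < 2" by (simp add: less_mult_imp_div_less)
  ultimately show ?thesis by linarith
qed simp

lemma binom_mult_bound:
  fixes p n :: nat assumes p: "prime p" and n: "n \<ge> 1"
  shows "p ^ multiplicity p (2*n choose n) \<le> 2*n"
proof (rule ccontr)
  define v where "v = multiplicity p (2*n choose n)"
  define q where "q = (\<lambda>j. p ^ j)"
  assume "\<not> p ^ multiplicity p (2*n choose n) \<le> 2*n"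
  hence big: "p ^ v > 2*n" by (simp add: v_def)
  have p1: "p > 1" using p prime_gt_1_nat by blast
  have v1: "v \<ge> 1" using big n by (cases v) auto
  have fe: "fact n * fact (2*n - n) * (2*n choose n) = (fact (2*n) :: nat)"
    by (rule binomial_fact_lemma) simp
  have cpos: "(2*n choose n) > 0" by simp
  have "multiplicity p (fact (2*n) :: nat) = multiplicity p (fact n :: nat) + multiplicity p (fact n :: nat) + v"
    unfolding v_def fe[symmetric] using p cpos
    by (simp add: prime_elem_multiplicity_mult_distrib)
  moreover have "multiplicity p (fact (2*n) :: nat) = (\<Sum>j\<in>{1..2*n}. 2*n div p ^ j)"
    by (rule legendre_aux[OF p]) simp
  moreover have "multiplicity p (fact n :: nat) = (\<Sum>j\<in>{1..2*n}. n div p ^ j)"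
    by (rule legendre_aux[OF p]) simp
  ultimately have eq: "(\<Sum>j\<in>{1..2*n}. 2*n div p ^ j) = 2 * (\<Sum>j\<in>{1..2*n}. n div p ^ j) + v"
    by simp
  have pt: "2*n div p ^ j \<le> 2 * (n div p ^ j) + (if j < v then 1 else 0)" for j
  proof (cases "j < v")
    case True then show ?thesis using div2_le[of n "p^j"] by simp
  next
    case False
    hence "p ^ v \<le> p ^ j" using p1 by (simp add: power_increasing)
    hence "2*n div p ^ j = 0" using big by simp
    then show ?thesis by simp
  qed
  have "(\<Sum>j\<in>{1..2*n}. 2*n div p ^ j) \<le> (\<Sum>j\<in>{1..2*n}. 2 * (n div p ^ j) + (if j < v then 1 else 0))"
    by (rule sum_mono) (rule pt)
  also have "\<dots> = 2 * (\<Sum>j\<in>{1..2*n}. n div p ^ j) + card {j\<in>{1..2*n}. j < v}"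
    by (simp add: sum.distrib sum_distrib_left sum.inter_filter[symmetric])
  also have "card {j\<in>{1..2*n}. j < v} \<le> card {1..<v}"
    by (rule card_mono) auto
  finally have "v \<le> card {1..<v}" using eq by linarith
  thus False using v1 by simp
qed


lemma cheb:
  fixes n :: nat assumes n: "n \<ge> 1"
  shows "2 ^ n \<le> (2*n) ^ card {p. prime p \<and> p \<le> 2*n}"
proof -
  define C where "C = 2*n choose n"
  have cpos: "C > 0" by (simp add: C_def)
  have "real (4 ^ n) / (2 * real n) \<le> real C"
    using central_binomial_lower_bound[of n] n by (simp add: C_def)
  moreover have "real (2 * n) \<le> real (2 ^ n)"
  proof -
    have "2 * m \<le> (2::nat) ^ m" for m
    proof (induction m)
      case (Suc m)
      have "1 \<le> (2::nat) ^ m" by simp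
      then show ?case using Suc by (cases m) auto
    qed simp
    hence "2 * n \<le> 2 ^ n" by blast
    thus ?thesis by linarith
  qed
  moreover have f4: "(4::real) ^ n = 2 ^ n * 2 ^ n"
    by (simp flip: power_mult_distrib)
  ultimately have "real (4 ^ n) / real (2 ^ n) \<le> real (4 ^ n) / (2 * real n)"
    using n by (intro divide_left_mono) auto
  moreover have "real (4 ^ n) / real (2 ^ n) = 2 ^ n" using f4 by simp
  ultimately have "real (2 ^ n) \<le> real C"
    using \<open>real (4 ^ n) / (2 * real n) \<le> real C\<close> by (simp only: of_nat_power of_nat_numeral)
  hence c1: "2 ^ n \<le> C" by linarith
  have PF: "prime_factors C \<subseteq> {p. prime p \<and> p \<le> 2*n}"
  proof
    fix p assume p: "p \<in> prime_factors C"
    hence pp: "prime p" and pd: "p dvd C" by auto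
    have "multiplicity p C \<ge> 1" using pd cpos pp
      by (simp add: Suc_le_eq prime_multiplicity_gt_zero_iff)
    hence "p ^ 1 \<le> p ^ multiplicity p C"
      using pp prime_gt_0_nat by (intro power_increasing) (auto simp: Suc_le_eq)
    also have "\<dots> \<le> 2*n" using binom_mult_bound[OF pp n] by (simp add: C_def)
    finally show "p \<in> {p. prime p \<and> p \<le> 2*n}" using pp by simp
  qed
  have "C = (\<Prod>p\<in>prime_factors C. p ^ multiplicity p C)"
    using prime_factorization_nat[OF cpos] .
  also have "\<dots> \<le> (\<Prod>p\<in>prime_factors C. 2*n)"
    by (rule prod_mono) (use binom_mult_bound n in \<open>auto simp: C_def\<close>)
  also have "\<dots> = (2*n) ^ card (prime_factors C)" by simp
  also have "\<dots> \<le> (2*n) ^ card {p. prime p \<and> p \<le> 2*n}"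
    using n PF by (intro power_increasing card_mono) auto
  finally show ?thesis using c1 by linarith
qed

lemma primes_infinite': "infinite {p::nat. prime p}"
  using primes_infinite by simp

lemma nth_prime_prime: "prime (nth_prime i)"
  unfolding nth_prime_def using enumerate_in_set[OF primes_infinite'] by blast

lemma nth_prime_ge: "i - 1 \<le> nth_prime i"
  unfolding nth_prime_def by (rule le_enumerate[OF primes_infinite'])

lemma nth_prime_mono: "1 \<le> i \<Longrightarrow> i < j \<Longrightarrow> nth_prime i < nth_prime j"
  unfolding nth_prime_def using primes_infinite' by simp

lemma pi_bound:
  assumes "k + 1 \<le> card {p. prime p \<and> p \<le> x}"
  shows "nth_prime (k+1) \<le> x"
proof (rule ccontr)
  define S where "S = {p::nat. prime p}"
  assume "\<not> nth_prime (k+1) \<le> x"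
  hence big: "enumerate S k > x" by (simp add: nth_prime_def S_def)
  have "{p. prime p \<and> p \<le> x} \<subseteq> enumerate S ` {..<k}"
  proof
    fix p assume "p \<in> {p. prime p \<and> p \<le> x}"
    hence pS: "p \<in> S" and px: "p \<le> x" by (auto simp: S_def)
    obtain j where j: "enumerate S j = p" using enumerate_Ex[OF _ pS] primes_infinite' S_def by blast
    have "enumerate S j < enumerate S k" using j px big by simp
    hence "j < k" using primes_infinite' S_def by simp
    thus "p \<in> enumerate S ` {..<k}" using j by blast
  qed
  hence "card {p. prime p \<and> p \<le> x} \<le> card (enumerate S ` {..<k})"
    by (intro card_mono) auto
  also have "\<dots> \<le> k" using card_image_le[of "{..<k}" "enumerate S"] by simp
  finally show False using assms by simp
qed



lemma alg_poly:
  fixes P l c k :: real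
  assumes "P > 0" "l > 0" "c > 0" "k > 0" "P * c \<le> 4 * k * l" "l ^ 12 \<le> 12 ^ 12 * P"
  shows "P ^ 3 * l ^ 8 * c ^ 4 \<le> 256 * 12 ^ 12 * k ^ 4"
proof -
  have "(P * c) ^ 4 \<le> (4 * k * l) ^ 4"
    using assms by (intro power_mono) auto
  hence h1: "P ^ 4 * c ^ 4 \<le> 256 * k ^ 4 * l ^ 4" by (simp add: power_mult_distrib)
  have "(P ^ 3 * l ^ 8 * c ^ 4) * (P * l ^ 4) = P ^ 4 * c ^ 4 * l ^ 12" by algebra
  also have "\<dots> \<le> (256 * k ^ 4 * l ^ 4) * (12 ^ 12 * P)"
    by (rule mult_mono[OF h1 assms(6)]) (use assms in auto)
  also have "\<dots> = (256 * 12 ^ 12 * k ^ 4) * (P * l ^ 4)" by algebra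
  finally have "(P ^ 3 * l ^ 8 * c ^ 4) * (P * l ^ 4) \<le> (256 * 12 ^ 12 * k ^ 4) * (P * l ^ 4)" .
  moreover have "P * l ^ 4 > 0" using assms by simp
  ultimately show ?thesis by (meson mult_le_cancel_right_pos)
qed


lemma final_alg:
  fixes P k :: real
  assumes P3: "P \<ge> 3" and k2: "k \<ge> 2" and kP: "k \<le> P" and rel: "P * ln 2 \<le> 4 * k * ln P"
  shows "9 * sqrt P * ln P / ln 2 \<le>
    root 6 (9 ^ 6 * 256 * 12 ^ 12 / ln 2 ^ 10) * k powr (2/3) / ln k powr (1/3)"
proof -
  define l where "l = ln P"
  define c where "c = ln (2::real)"
  define lk where "lk = ln k"
  define D where "D = (9::real) ^ 6 * 256 * 12 ^ 12 / ln 2 ^ 10"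
  define T where "T = 9 * sqrt P * ln P / ln 2"
  define R where "R = root 6 D * k powr (2/3) / ln k powr (1/3)"
  have c0: "c > 0" by (simp add: c_def)
  have l0: "l > 0" using P3 by (simp add: l_def)
  have lk0: "lk > 0" using k2 by (simp add: lk_def)
  have lkl: "lk \<le> l" using k2 kP by (simp add: lk_def l_def)
  have D0: "D > 0" by (simp add: D_def)
  have "l powr 12 \<le> 12 powr 12 * P"
    unfolding l_def using ln_powr_bound2[of P 12] P3 by simp
  hence l12: "l ^ 12 \<le> 12 ^ 12 * P" using l0 by (simp add: powr_numeral)
  have ap: "P ^ 3 * l ^ 8 * c ^ 4 \<le> 256 * 12 ^ 12 * k ^ 4"
    by (rule alg_poly) (use P3 l0 c0 k2 rel l12 in \<open>auto simp: l_def c_def\<close>)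
  have sq: "sqrt P ^ 6 = P ^ 3"
  proof -
    have "sqrt P ^ 6 = (sqrt P ^ 2) ^ 3" by (simp flip: power_mult)
    thus ?thesis using P3 by simp
  qed
  have T6: "T ^ 6 = 9 ^ 6 * P ^ 3 * l ^ 6 / c ^ 6"
    unfolding T_def l_def c_def by (simp add: power_mult_distrib power_divide sq)
  have "T ^ 6 * lk ^ 2 \<le> T ^ 6 * l ^ 2"
    using lk0 lkl by (intro mult_left_mono power_mono) auto
  also have "\<dots> = 9 ^ 6 * (P ^ 3 * l ^ 8 * c ^ 4) / c ^ 10"
    unfolding T6 using c0 by (simp add: field_simps)
  also have "\<dots> \<le> 9 ^ 6 * (256 * 12 ^ 12 * k ^ 4) / c ^ 10"
    using ap c0 by (intro divide_right_mono mult_left_mono) auto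
  also have "\<dots> = D * k ^ 4" by (simp add: D_def c_def)
  finally have "T ^ 6 * lk ^ 2 \<le> D * k ^ 4" .
  hence T6le: "T ^ 6 \<le> D * k ^ 4 / lk ^ 2" using lk0 by (simp add: pos_le_divide_eq)
  have R6: "R ^ 6 = D * k ^ 4 / lk ^ 2"
  proof -
    have "(k powr (2/3)) ^ 6 = k ^ 4"
      using k2 by (simp add: powr_power powr_numeral)
    moreover have "(ln k powr (1/3)) ^ 6 = lk ^ 2"
      using lk0 by (simp add: powr_power powr_numeral lk_def)
    moreover have "root 6 D ^ 6 = D" using D0 by simp
    ultimately show ?thesis unfolding R_def by (simp add: power_mult_distrib power_divide)
  qed
  have R0: "R \<ge> 0" unfolding R_def using D0 k2 by simp
  have "T \<le> R"
    using power_le_imp_le_base[of T 5 R] T6le R6 R0 by (simp add: numeral_eq_Suc)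
  thus ?thesis unfolding T_def R_def D_def .
qed


lemma P_ge3: "k \<ge> 1 \<Longrightarrow> nth_prime (k+1) \<ge> 3"
proof -
  assume "k \<ge> 1"
  hence "nth_prime 1 < nth_prime (k+1)" by (intro nth_prime_mono) auto
  moreover have "nth_prime 1 \<ge> 2" using nth_prime_prime prime_ge_2_nat by blast
  ultimately show ?thesis by linarith
qed

lemma P_rel:
  assumes k2: "k \<ge> 2"
  shows "real (nth_prime (k+1)) * ln 2 \<le> 4 * real k * ln (real (nth_prime (k+1)))"
proof -
  define P where "P = nth_prime (k+1)"
  have P3: "P \<ge> 3" using P_ge3 k2 by (simp add: P_def)
  define n where "n = (P - 1) div 2"
  have n1: "n \<ge> 1" using P3 by (simp add: n_def)
  have nP: "2 * n < P" "P \<le> 4 * n" using P3 n1 by (auto simp: n_def)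
  have pi: "card {p. prime p \<and> p \<le> 2*n} \<le> k"
  proof (rule ccontr)
    assume "\<not> ?thesis"
    hence "nth_prime (k+1) \<le> 2*n" by (intro pi_bound) auto
    thus False using nP by (simp add: P_def)
  qed
  have "2 ^ n \<le> (2*n) ^ card {p. prime p \<and> p \<le> 2*n}" by (rule cheb[OF n1])
  also have "\<dots> \<le> (2*n) ^ k" using n1 pi by (intro power_increasing) auto
  finally have "real (2 ^ n) \<le> real ((2*n) ^ k)" by linarith
  hence "ln (real (2 ^ n)) \<le> ln (real ((2*n) ^ k))"
    by (subst ln_le_cancel_iff) (use n1 in auto)
  moreover have "real ((2*n) ^ k) = (2 * real n) ^ k" by simp
  moreover have "real (2 ^ n) = 2 ^ n" by simp
  ultimately have h: "real n * ln 2 \<le> real k * ln (2 * real n)"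
    by (simp only: ln_realpow)
  have "ln (2 * real n) \<le> ln (real P)" using nP n1 by simp
  hence "real k * ln (2 * real n) \<le> real k * ln (real P)" by (intro mult_left_mono) auto
  moreover have "real P * ln 2 \<le> 4 * (real n * ln 2)" using nP by simp
  ultimately show ?thesis using h unfolding P_def by linarith
qed


lemma term_bound:
  assumes k2: "k \<ge> 2" and red: "reduced n" and z: "\<forall>i>k. expo n i = 0"
    and i: "1 \<le> i" "i \<le> k" "expo n i \<ge> 3"
  shows "real (expo n i) \<le> 3 + 2 * ln (real (nth_prime (k+1))) / ln 2
         \<and> (i - 1) ^ 2 < nth_prime (k+1)"
proof -
  define P where "P = nth_prime (k+1)"
  define a where "a = expo n i"
  have P3: "P \<ge> 3" using P_ge3 k2 by (simp add: P_def)
  have lP: "ln (real P) \<ge> 0" using P3 by simp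
  have a0: "expo n (k+1) = 0" using z by simp
  have l2: "ln (2::real) > 0" by simp
  show ?thesis
  proof (cases "i = 1")
    case True
    have "(2::real) ^ expo n 1 < 8 * (real (nth_prime (k+1)))^2"
      using red a0 unfolding reduced_def by auto
    hence "(2::real) ^ a < 8 * (real P)^2" using True by (simp add: a_def P_def)
    hence "ln ((2::real) ^ a) < ln (8 * (real P)^2)"
      by (subst ln_less_cancel_iff) (use P3 in auto)
    also have "ln (8 * (real P)^2) = 3 * ln 2 + 2 * ln (real P)"
    proof -
      have "ln (8 * (real P)^2) = ln 8 + ln ((real P)^2)" using P3 by (simp add: ln_mult)
      also have "ln (8::real) = ln (2 ^ 3)" by simp
      also have "\<dots> = 3 * ln 2" by (simp only: ln_realpow)
      finally show ?thesis using P3 by (simp add: ln_realpow)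
    qed
    finally have "real a * ln 2 < 3 * ln 2 + 2 * ln (real P)" by (simp add: ln_realpow)
    hence "real a < 3 + 2 * ln (real P) / ln 2" using l2 by (simp add: field_simps)
    then show ?thesis using True P3 by (simp add: a_def P_def)
  next
    case False
    hence i2: "i \<ge> 2" using i by simp
    define q where "q = nth_prime i"
    have q2: "q \<ge> 2" using nth_prime_prime prime_ge_2_nat q_def by blast
    have lq: "ln (real q) \<ge> ln 2" using q2 by simp
    have "real_of_int \<lfloor>(real (expo n i) + 1) / (real (expo n (k+1)) + 2)\<rfloor>
         < ln (real (nth_prime (k+1))) / ln (real (nth_prime i))"
      using red i2 k2 unfolding reduced_def by auto
    hence fl: "real_of_int \<lfloor>(real a + 1) / 2\<rfloor> < ln (real P) / ln (real q)"
      using a0 by (simp add: a_def P_def q_def)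
    have "2 \<le> \<lfloor>(real a + 1) / 2\<rfloor>" using i(3) by (simp add: le_floor_iff a_def)
    hence "2 < ln (real P) / ln (real q)" using fl by linarith
    hence "2 * ln (real q) < ln (real P)" using lq l2 by (simp add: field_simps)
    hence "ln (real q ^ 2) < ln (real P)" by (simp add: ln_realpow)
    hence "real q ^ 2 < real P" using q2 P3 by (subst (asm) ln_less_cancel_iff) auto
    hence qP: "q ^ 2 < P" by (metis of_nat_less_iff of_nat_power)
    have "i - 1 \<le> q" using nth_prime_ge q_def by simp
    hence "(i - 1) ^ 2 \<le> q ^ 2" by (rule power_mono) simp
    hence c2: "(i - 1) ^ 2 < P" using qP by linarith
    have "(real a + 1) / 2 - 1 < real_of_int \<lfloor>(real a + 1) / 2\<rfloor>" by (rule real_of_int_floor_gt_diff_one)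
    moreover have "(real a - 1) / 2 = (real a + 1) / 2 - 1" by (simp add: field_simps)
    ultimately have "(real a - 1) / 2 < ln (real P) / ln (real q)" using fl by linarith
    hence "real a - 1 < 2 * ln (real P) / ln (real q)" by (simp add: field_simps)
    also have "\<dots> \<le> 2 * ln (real P) / ln 2"
      using lP lq q2 by (intro divide_left_mono mult_pos_pos) auto
    finally have "real a \<le> 3 + 2 * ln (real P) / ln 2" by linarith
    then show ?thesis using c2 by (simp add: a_def P_def)
  qed
qed


lemma sum_bound:
  assumes k2: "k \<ge> 2" and red: "reduced n" and z: "\<forall>i>k. expo n i = 0"
  shows "real (\<Sum>i\<in>{i. 1 \<le> i \<and> i \<le> k \<and> expo n i \<ge> 3}. expo n i - 2)
     \<le> 9 * sqrt (real (nth_prime (k+1))) * ln (real (nth_prime (k+1))) / ln 2"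
proof -
  define S where "S = {i. 1 \<le> i \<and> i \<le> k \<and> expo n i \<ge> 3}"
  define P where "P = real (nth_prime (k+1))"
  define m where "m = nat \<lfloor>sqrt P\<rfloor>"
  have P3: "P \<ge> 3" using P_ge3 k2 by (simp add: P_def)
  have lP2: "ln P \<ge> ln 2" using P3 by simp
  have l2: "ln (2::real) > 0" by simp
  have fin: "finite S" by (rule finite_subset[of _ "{1..k}"]) (auto simp: S_def)
  have sub: "S \<subseteq> {..m+1}"
  proof
    fix i assume iS: "i \<in> S"
    hence "(i - 1) ^ 2 < nth_prime (k+1)"
      using term_bound[OF k2 red z] by (auto simp: S_def)
    hence "real (i - 1) ^ 2 < P" unfolding P_def by (metis of_nat_less_iff of_nat_power)
    hence "real (i - 1) < sqrt P" by (rule real_less_rsqrt)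
    hence "int (i - 1) \<le> \<lfloor>sqrt P\<rfloor>" by (simp add: le_floor_iff)
    hence "i - 1 \<le> m" unfolding m_def by linarith
    thus "i \<in> {..m+1}" by simp
  qed
  have "card S \<le> card {..m+1}" by (rule card_mono[OF _ sub]) simp
  hence "real (card S) \<le> real m + 2" by simp
  moreover have "real m \<le> sqrt P" unfolding m_def using P3 by simp
  moreover have "sqrt P \<ge> 1" using P3 by simp
  ultimately have cS: "real (card S) \<le> 3 * sqrt P" by linarith
  have tb: "real (expo n i - 2) \<le> 3 * ln P / ln 2" if "i \<in> S" for i
  proof -
    have "real (expo n i) \<le> 3 + 2 * ln P / ln 2"
      using term_bound[OF k2 red z] that by (auto simp: S_def P_def)
    moreover have "real (expo n i - 2) = real (expo n i) - 2" using that by (auto simp: S_def)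
    moreover have "1 \<le> ln P / ln 2" using lP2 l2 by simp
    ultimately show ?thesis by (simp add: field_simps)
  qed
  have "real (\<Sum>i\<in>S. expo n i - 2) = (\<Sum>i\<in>S. real (expo n i - 2))" by simp
  also have "\<dots> \<le> (\<Sum>i\<in>S. 3 * ln P / ln 2)" by (rule sum_mono) (rule tb)
  also have "\<dots> = real (card S) * (3 * ln P / ln 2)" by simp
  also have "\<dots> \<le> (3 * sqrt P) * (3 * ln P / ln 2)"
    using cS P3 by (intro mult_right_mono) auto
  also have "\<dots> = 9 * sqrt P * ln P / ln 2" by simp
  finally show ?thesis unfolding S_def P_def .
qed

theorem lemma3p14:
  shows "\<exists>C>0. \<forall>k::nat. k \<ge> 2 \<longrightarrow> (\<forall>n. reduced n \<longrightarrow> (\<forall>i>k. expo n i = 0) \<longrightarrow>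
      real (\<Sum>i\<in>{i. 1 \<le> i \<and> i \<le> k \<and> expo n i \<ge> 3}. expo n i - 2)
        \<le> C * real k powr (2/3) / ln (real k) powr (1/3))"
proof (intro exI conjI allI impI)
  show "root 6 (9 ^ 6 * 256 * 12 ^ 12 / ln 2 ^ 10) > (0::real)" by simp
next
  fix k :: nat and n
  assume k2: "k \<ge> 2" and red: "reduced n" and z: "\<forall>i>k. expo n i = 0"
  have P3: "real (nth_prime (k+1)) \<ge> 3" using P_ge3 k2 by simp
  have kP: "real k \<le> real (nth_prime (k+1))" using nth_prime_ge[of "k+1"] by simp
  show "real (\<Sum>i\<in>{i. 1 \<le> i \<and> i \<le> k \<and> expo n i \<ge> 3}. expo n i - 2)
        \<le> root 6 (9 ^ 6 * 256 * 12 ^ 12 / ln 2 ^ 10) * real k powr (2/3) / ln (real k) powr (1/3)"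
    using sum_bound[OF k2 red z] final_alg[OF P3 _ kP P_rel[OF k2]] k2 by simp
qed

end
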